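(* Let $T$ be a finite rooted tree each of whose nodes $v$ carries a label $\ell(v)\in\mathbb{N}=\{1,2,\dots\}$. For $i\in\mathbb{N}$ let $p_i$ denote the $i$-th prime number. For each node $v$ let $n_v$ be the number of vertices in the subtree $T_v$ rooted at $v$, and define $C_v(x)\in\mathbb{Z}[x]$ inductively by $C_v(x)=x+p_{\ell(v)}$ if $v$ is a leaf, and $C_v(x)=x^{n_v}+p_{\ell(v)}\,x\prod_{u\text{ child of }v}C_u(x)+p_{\ell(v)}$ if $v$ is an internal node. Then for every vertex $v$ of $T$, $C_v(x)$ is irreducible over $\mathbb{Q}$.
   Context: $T_v$ consists of $v$ and all its descendants; $p_1=2,p_2=3,\dots$. *)

theory Defs
  imports "HOL-Computational_Algebra.Computational_Algebra" "HOL-Library.Infinite_Set"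
begin

datatype ltree = Node nat "ltree list"

fun label :: "ltree \<Rightarrow> nat" where
  "label (Node l cs) = l"

fun labels :: "ltree \<Rightarrow> nat set" where
  "labels (Node l cs) = insert l (\<Union> (set (map labels cs)))"

fun subtrees :: "ltree \<Rightarrow> ltree set" where
  "subtrees (Node l cs) = insert (Node l cs) (\<Union> (set (map subtrees cs)))"

fun nverts :: "ltree \<Rightarrow> nat" where
  "nverts (Node l cs) = 1 + sum_list (map nverts cs)"

text \<open>The i-th prime, 1-indexed: p_1 = 2, p_2 = 3, ...\<close>
definition nth_prime :: "nat \<Rightarrow> nat" where
  "nth_prime i = enumerate {p::nat. prime p} (i - 1)"

fun Cpoly :: "ltree \<Rightarrow> int poly" where
  "Cpoly (Node l cs) =
     (if cs = [] then [:int (nth_prime l), 1:]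
      else monom 1 (nverts (Node l cs))
           + smult (int (nth_prime l)) ([:0, 1:] * prod_list (map Cpoly cs))
           + [:int (nth_prime l):])"

end

theory Submission
  imports Defs "Berlekamp_Zassenhaus.Factor_Bound"
begin

lemma eis_aux:
  fixes g h :: "int poly" and q :: int
  assumes q: "prime q" and f: "f = g * h" and n: "degree f = n"
    and lg: "\<not> q dvd lead_coeff g"
    and dg: "degree g < n"
    and low: "\<forall>i<n. q dvd Polynomial.coeff f i"
    and c0: "\<not> q^2 dvd Polynomial.coeff f 0"
    and g0: "q dvd Polynomial.coeff g 0"
  shows False
proof -
  have f0: "Polynomial.coeff f 0 = Polynomial.coeff g 0 * Polynomial.coeff h 0" using f by (simp add: coeff_mult)
  have h0: "\<not> q dvd Polynomial.coeff h 0"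
  proof
    assume "q dvd Polynomial.coeff h 0"
    with g0 have "q * q dvd Polynomial.coeff g 0 * Polynomial.coeff h 0" by (rule mult_dvd_mono)
    with c0 f0 show False by (simp add: power2_eq_square)
  qed
  define k where "k = (LEAST k. \<not> q dvd Polynomial.coeff g k)"
  have ex: "\<not> q dvd Polynomial.coeff g (degree g)" using lg by simp
  have kg: "\<not> q dvd Polynomial.coeff g k" unfolding k_def by (rule LeastI[of _ "degree g"], rule ex)
  have kle: "k \<le> degree g" unfolding k_def by (rule Least_le, rule ex)
  have below: "q dvd Polynomial.coeff g i" if "i < k" for i
    using not_less_Least[of i "\<lambda>k. \<not> q dvd Polynomial.coeff g k"] that unfolding k_def by blast
  have "Polynomial.coeff f k = (\<Sum>i\<le>k. Polynomial.coeff g i * Polynomial.coeff h (k - i))" using f by (simp add: coeff_mult)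
  also have "\<dots> = (\<Sum>i<k. Polynomial.coeff g i * Polynomial.coeff h (k - i)) + Polynomial.coeff g k * Polynomial.coeff h 0"
    by (simp add: lessThan_Suc_atMost[symmetric])
  finally have eq: "Polynomial.coeff f k = (\<Sum>i<k. Polynomial.coeff g i * Polynomial.coeff h (k - i)) + Polynomial.coeff g k * Polynomial.coeff h 0" .
  have s: "q dvd (\<Sum>i<k. Polynomial.coeff g i * Polynomial.coeff h (k - i))"
    by (rule dvd_sum) (simp add: below)
  have "q dvd Polynomial.coeff f k" using low kle dg by auto
  with eq s have "q dvd Polynomial.coeff g k * Polynomial.coeff h 0" by (metis dvd_add_right_iff)
  with q kg h0 show False using prime_dvd_mult_iff by blast
qed

lemma eisenstein:
  fixes f :: "int poly" and q :: int
  assumes q: "prime q" and np: "n > 0"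
    and top: "\<not> q dvd Polynomial.coeff f n" and above: "\<forall>i>n. Polynomial.coeff f i = 0"
    and low: "\<forall>i<n. q dvd Polynomial.coeff f i"
    and c0: "\<not> q^2 dvd Polynomial.coeff f 0"
  shows "irreducible\<^sub>d f"
proof -
  have fn0: "Polynomial.coeff f n \<noteq> 0" using top by auto
  have deg: "degree f = n"
  proof (rule antisym)
    show "degree f \<le> n" using above by (intro degree_le) auto
    show "n \<le> degree f" using fn0 by (rule le_degree)
  qed
  show ?thesis
  proof (rule irreducible\<^sub>dI)
    show "degree f > 0" using deg np by simp
    fix g h assume "degree g > 0" "degree g < degree f" "degree h > 0" "degree h < degree f"
      and fgh: "f = g * h"
    have lc: "lead_coeff f = lead_coeff g * lead_coeff h" using fgh by (simp add: lead_coeff_mult)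
    have nlc: "\<not> q dvd lead_coeff f" using top deg by simp
    have lg: "\<not> q dvd lead_coeff g" using nlc lc by (metis dvd_mult2)
    have lh: "\<not> q dvd lead_coeff h" using nlc lc by (metis dvd_mult)
    have "q dvd Polynomial.coeff f 0" using low np by auto
    moreover have "Polynomial.coeff f 0 = Polynomial.coeff g 0 * Polynomial.coeff h 0" using fgh by (simp add: coeff_mult)
    ultimately have "q dvd Polynomial.coeff g 0 \<or> q dvd Polynomial.coeff h 0" using q prime_dvd_mult_iff by metis
    then show False
    proof
      assume "q dvd Polynomial.coeff g 0"
      then show False using eis_aux[OF q fgh deg lg _ low c0] \<open>degree g < degree f\<close> deg by simp
    next
      assume "q dvd Polynomial.coeff h 0"
      have fhg: "f = h * g" using fgh by (simp add: mult.commute)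
      then show False using eis_aux[OF q fhg deg lh _ low c0] \<open>degree h < degree f\<close> deg
        \<open>q dvd Polynomial.coeff h 0\<close> by simp
    qed
  qed
qed

lemma nth_prime_prime: "prime (nth_prime i)"
  unfolding nth_prime_def using enumerate_in_set[OF primes_infinite] by simp

lemma prod_deg:
  assumes "\<forall>c\<in>set cs. degree (Cpoly c) = nverts c \<and> lead_coeff (Cpoly c) > 0"
  shows "degree (prod_list (map Cpoly cs)) = sum_list (map nverts cs)
    \<and> lead_coeff (prod_list (map Cpoly cs)) > 0"
  using assms
proof (induction cs)
  case Nil
  then show ?case by simp
next
  case (Cons c cs)
  let ?P = "prod_list (map Cpoly cs)"
  have a: "degree (Cpoly c) = nverts c" "lead_coeff (Cpoly c) > 0" using Cons.prems by auto
  have "\<forall>c\<in>set cs. degree (Cpoly c) = nverts c \<and> lead_coeff (Cpoly c) > 0" using Cons.prems by (meson list.set_intros(2))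
  then have b: "degree ?P = sum_list (map nverts cs)" "lead_coeff ?P > 0" using Cons.IH by blast+
  have nz: "Cpoly c \<noteq> 0" "?P \<noteq> 0"
    using a(2) b(2) by (metis leading_coeff_0_iff order_less_irrefl)+
  have "degree (Cpoly c * ?P) = nverts c + sum_list (map nverts cs)"
    using a b nz by (simp add: degree_mult_eq)
  moreover have "lead_coeff (Cpoly c * ?P) > 0"
    using a b by (simp only: lead_coeff_mult) (rule mult_pos_pos)
  ultimately show ?case by simp
qed

lemma Cpoly_coeffs:
  "degree (Cpoly t) = nverts t \<and> lead_coeff (Cpoly t) > 0"
proof (induction t rule: Cpoly.induct)
  case (1 l cs)
  show ?case
  proof (cases "cs = []")
    case True
    then show ?thesis by simp
  next
    case False
    let ?P = "prod_list (map Cpoly cs)"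
    let ?p = "int (nth_prime l)"
    let ?n = "nverts (Node l cs)"
    have "\<forall>c\<in>set cs. degree (Cpoly c) = nverts c \<and> lead_coeff (Cpoly c) > 0"
      using 1 False by blast
    from prod_deg[OF this] have P: "degree ?P = sum_list (map nverts cs)" "lead_coeff ?P > 0"
      by blast+
    have n: "?n = Suc (degree ?P)" using P by simp
    have pp: "?p > 0" using nth_prime_prime[of l] prime_gt_0_nat by auto
    have C: "Cpoly (Node l cs) = Polynomial.monom 1 ?n + Polynomial.smult ?p (pCons 0 ?P) + [:?p:]"
      using False by simp
    have cn: "Polynomial.coeff (Cpoly (Node l cs)) ?n = 1 + ?p * lead_coeff ?P"
      unfolding C n by (simp add: coeff_monom)
    have ab: "Polynomial.coeff (Cpoly (Node l cs)) i = 0" if "i > ?n" for i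
    proof -
      have "Polynomial.coeff ?P (i - 1) = 0" using that n by (intro coeff_eq_0) auto
      then show ?thesis unfolding C using that n by (cases i) (auto simp: coeff_monom)
    qed
    have "?p * lead_coeff ?P > 0" using pp P(2) by (rule mult_pos_pos)
    then have pos: "Polynomial.coeff (Cpoly (Node l cs)) ?n > 0" unfolding cn by linarith
    have deg: "degree (Cpoly (Node l cs)) = ?n"
    proof (rule antisym)
      show "degree (Cpoly (Node l cs)) \<le> ?n" using ab by (intro degree_le) auto
      show "?n \<le> degree (Cpoly (Node l cs))" using pos by (intro le_degree) auto
    qed
    show ?thesis using deg pos by simp
  qed
qed

lemma Cpoly_irred:
  assumes "label t \<ge> 1"
  shows "irreducible\<^sub>d (Cpoly t)"
proof (cases t)
  case (Node l cs)
  let ?p = "int (nth_prime l)"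
  have q: "prime ?p" using nth_prime_prime by simp
  have pp: "?p > 1" using q prime_gt_1_int by blast
  have np2: "\<not> ?p^2 dvd ?p"
  proof
    assume "?p^2 dvd ?p"
    then have "?p^2 \<le> ?p" using pp by (intro zdvd_imp_le) auto
    then show False using pp by (simp add: power2_eq_square)
  qed
  show ?thesis
  proof (cases "cs = []")
    case True
    show ?thesis
    proof (rule eisenstein[OF q, of 1])
      show "\<not> ?p dvd Polynomial.coeff (Cpoly t) 1" using Node True pp by (simp add: zdvd_not_zless)
      show "\<forall>i>1. Polynomial.coeff (Cpoly t) i = 0" using Node True by (auto simp: coeff_pCons split: nat.split)
      show "\<forall>i<1. ?p dvd Polynomial.coeff (Cpoly t) i" using Node True by simp
      show "\<not> ?p^2 dvd Polynomial.coeff (Cpoly t) 0" using Node True np2 by simp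
    qed simp
  next
    case False
    let ?P = "prod_list (map Cpoly cs)"
    let ?n = "nverts (Node l cs)"
    have C: "Cpoly t = Polynomial.monom 1 ?n + Polynomial.smult ?p (pCons 0 ?P) + [:?p:]"
      using False Node by simp
    have dP: "degree ?P < ?n"
      using Cpoly_coeffs[of t] Node
      by (metis (no_types, lifting) Cpoly_coeffs prod_deg less_add_one add.commute nverts.simps)
    have cn: "Polynomial.coeff (Cpoly t) ?n = 1 + ?p * Polynomial.coeff ?P (?n - 1)"
      unfolding C by (cases ?n) (auto simp: coeff_monom)
    show ?thesis
    proof (rule eisenstein[OF q, of ?n])
      show "?n > 0" by simp
      show "\<not> ?p dvd Polynomial.coeff (Cpoly t) ?n"
      proof
        assume "?p dvd Polynomial.coeff (Cpoly t) ?n"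
        then have "?p dvd 1" unfolding cn by (simp add: dvd_add_left_iff)
        then show False using pp by auto
      qed
      have dt: "degree (Cpoly t) = nverts t" using Cpoly_coeffs[of t] by blast
      have "nverts t = ?n" using Node by simp
      then show "\<forall>i>?n. Polynomial.coeff (Cpoly t) i = 0"
        using dt by (auto intro: coeff_eq_0)
      show "\<forall>i<?n. ?p dvd Polynomial.coeff (Cpoly t) i"
      proof (intro allI impI)
        fix i assume "i < ?n"
        then have "Polynomial.coeff (Cpoly t) i = ?p * Polynomial.coeff (pCons 0 ?P) i + (if i = 0 then ?p else 0)"
          unfolding C by (auto simp: coeff_monom coeff_pCons split: nat.split)
        then show "?p dvd Polynomial.coeff (Cpoly t) i" by simp
      qed
      have "Polynomial.coeff (Cpoly t) 0 = ?p" unfolding C by (simp add: coeff_monom)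
      then show "\<not> ?p^2 dvd Polynomial.coeff (Cpoly t) 0" using np2 by simp
    qed
  qed
qed

lemma subtree_labels: "v \<in> subtrees T \<Longrightarrow> labels v \<subseteq> labels T"
  by (induction T rule: subtrees.induct) auto

lemma label_in: "label v \<in> labels v"
  by (cases v) auto

theorem mainTheorem4:
  fixes T :: ltree
  assumes "\<forall>l \<in> labels T. l \<ge> 1"
  shows "\<forall>v \<in> subtrees T. irreducible (map_poly (of_int :: int \<Rightarrow> rat) (Cpoly v))"
proof
  fix v assume "v \<in> subtrees T"
  then have "label v \<ge> 1" using assms subtree_labels label_in by blast
  then have "irreducible\<^sub>d (Cpoly v)" by (rule Cpoly_irred)
  then have "irreducible\<^sub>d (map_poly rat_of_int (Cpoly v))" by (rule irreducible\<^sub>d_int_rat)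
  then show "irreducible (map_poly (of_int :: int \<Rightarrow> rat) (Cpoly v))" by simp
qed

end
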